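(* Let $S$ be an AG-groupoid with a left identity. If $B_{1}$ and $B_{2}$ are bi-ideals of $S$, then the product $B_{1}B_{2}$ is a bi-ideal of $S$.
   Context: An AG-groupoid is a set $S$ with a binary operation satisfying $(ab)c=(cb)a$ for all $a,b,c\in S$. A left identity is an element $e$ with $ea=a$ for all $a\in S$. For nonempty subsets, $AB=\{ab:a\in A,b\in B\}$. A bi-ideal of $S$ is a nonempty subset $B$ with $BB\subseteq B$ and $(BS)B\subseteq B$. *)

theory Defs
  imports Main
begin

definition AG_groupoid :: "'a set \<Rightarrow> ('a \<Rightarrow> 'a \<Rightarrow> 'a) \<Rightarrow> bool" where
  "AG_groupoid S f \<longleftrightarrow>
     (\<forall>a\<in>S. \<forall>b\<in>S. f a b \<in> S) \<and>
     (\<forall>a\<in>S. \<forall>b\<in>S. \<forall>c\<in>S. f (f a b) c = f (f c b) a)"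

definition left_identity :: "'a set \<Rightarrow> ('a \<Rightarrow> 'a \<Rightarrow> 'a) \<Rightarrow> 'a \<Rightarrow> bool" where
  "left_identity S f e \<longleftrightarrow> e \<in> S \<and> (\<forall>a\<in>S. f e a = a)"

definition set_prod :: "('a \<Rightarrow> 'a \<Rightarrow> 'a) \<Rightarrow> 'a set \<Rightarrow> 'a set \<Rightarrow> 'a set" where
  "set_prod f A B = {f a b | a b. a \<in> A \<and> b \<in> B}"

definition bi_ideal :: "'a set \<Rightarrow> ('a \<Rightarrow> 'a \<Rightarrow> 'a) \<Rightarrow> 'a set \<Rightarrow> bool" where
  "bi_ideal S f B \<longleftrightarrow> B \<noteq> {} \<and> B \<subseteq> S \<and>
     set_prod f B B \<subseteq> B \<and> set_prod f (set_prod f B S) B \<subseteq> B"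

end

theory Submission
  imports Defs
begin

lemma medial:
  assumes "AG_groupoid S f" "a \<in> S" "b \<in> S" "c \<in> S" "d \<in> S"
  shows "f (f a b) (f c d) = f (f a c) (f b d)"
proof -
  have cl: "\<And>x y. x \<in> S \<Longrightarrow> y \<in> S \<Longrightarrow> f x y \<in> S" and
       li: "\<And>x y z. x \<in> S \<Longrightarrow> y \<in> S \<Longrightarrow> z \<in> S \<Longrightarrow> f (f x y) z = f (f z y) x"
    using assms(1) unfolding AG_groupoid_def by auto
  have "f (f a b) (f c d) = f (f (f c d) b) a" using li[of a b "f c d"] cl assms by simp
  also have "\<dots> = f (f (f b d) c) a" using li[of c d b] assms by simp
  also have "\<dots> = f (f a c) (f b d)" using li[of "f b d" c a] cl assms by simp
  finally show ?thesis .
qed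

theorem proposition2:
  fixes S :: "'a set" and f :: "'a \<Rightarrow> 'a \<Rightarrow> 'a" and e :: 'a
  assumes "AG_groupoid S f"
    and "left_identity S f e"
    and "bi_ideal S f B1"
    and "bi_ideal S f B2"
  shows "bi_ideal S f (set_prod f B1 B2)"
proof -
  have cl: "\<And>x y. x \<in> S \<Longrightarrow> y \<in> S \<Longrightarrow> f x y \<in> S"
    using assms(1) unfolding AG_groupoid_def by auto
  have eS: "e \<in> S" and el: "\<And>x. x \<in> S \<Longrightarrow> f e x = x"
    using assms(2) unfolding left_identity_def by auto
  have B1: "B1 \<noteq> {}" "B1 \<subseteq> S" "\<And>x y. x \<in> B1 \<Longrightarrow> y \<in> B1 \<Longrightarrow> f x y \<in> B1"
    "\<And>x s y. x \<in> B1 \<Longrightarrow> s \<in> S \<Longrightarrow> y \<in> B1 \<Longrightarrow> f (f x s) y \<in> B1"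
    using assms(3) unfolding bi_ideal_def set_prod_def by blast+
  have B2: "B2 \<noteq> {}" "B2 \<subseteq> S" "\<And>x y. x \<in> B2 \<Longrightarrow> y \<in> B2 \<Longrightarrow> f x y \<in> B2"
    "\<And>x s y. x \<in> B2 \<Longrightarrow> s \<in> S \<Longrightarrow> y \<in> B2 \<Longrightarrow> f (f x s) y \<in> B2"
    using assms(4) unfolding bi_ideal_def set_prod_def by blast+
  have ne: "set_prod f B1 B2 \<noteq> {}" using B1(1) B2(1) unfolding set_prod_def by blast
  have sub: "set_prod f B1 B2 \<subseteq> S" using B1(2) B2(2) cl unfolding set_prod_def by blast
  have c1: "set_prod f (set_prod f B1 B2) (set_prod f B1 B2) \<subseteq> set_prod f B1 B2"
  proof
    fix z assume "z \<in> set_prod f (set_prod f B1 B2) (set_prod f B1 B2)"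
    then obtain a b c d where z: "z = f (f a b) (f c d)" and h: "a \<in> B1" "b \<in> B2" "c \<in> B1" "d \<in> B2"
      unfolding set_prod_def by blast
    have "z = f (f a c) (f b d)" using z medial[OF assms(1)] h B1(2) B2(2) by blast
    then show "z \<in> set_prod f B1 B2" using h B1(3) B2(3) unfolding set_prod_def by blast
  qed
  have c2: "set_prod f (set_prod f (set_prod f B1 B2) S) (set_prod f B1 B2) \<subseteq> set_prod f B1 B2"
  proof
    fix z assume "z \<in> set_prod f (set_prod f (set_prod f B1 B2) S) (set_prod f B1 B2)"
    then obtain a b s c d where z: "z = f (f (f a b) s) (f c d)" and h: "a \<in> B1" "b \<in> B2" "s \<in> S" "c \<in> B1" "d \<in> B2"
      unfolding set_prod_def by blast
    have hS: "a \<in> S" "b \<in> S" "c \<in> S" "d \<in> S" using h B1(2) B2(2) by auto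
    have "f (f a b) s = f (f a b) (f e s)" using el h by simp
    also have "\<dots> = f (f a e) (f b s)" using medial[OF assms(1)] hS eS h by blast
    finally have "z = f (f (f a e) (f b s)) (f c d)" using z by simp
    also have "\<dots> = f (f (f a e) c) (f (f b s) d)" using medial[OF assms(1), of "f a e" "f b s" c d] hS eS h cl by simp
    finally have "z = f (f (f a e) c) (f (f b s) d)" .
    then show "z \<in> set_prod f B1 B2" using h eS B1(4) B2(4) unfolding set_prod_def by blast
  qed
  show ?thesis unfolding bi_ideal_def using ne sub c1 c2 by blast
qed

end
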